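(* Let $p$ be an odd prime, and let $k,m$ be positive integers with $km=p-1$. Let $G$ be the multiplicative group $\{r+p\mathbb{Z}: r=1,\ldots,p-1\}$ and $H$ its subgroup $\{x^m+p\mathbb{Z}: x=1,\ldots,p-1\}$ of order $k$. Suppose that the $m$ distinct cosets of $H$ in $G$ are $$\{a_{1j}+p\mathbb{Z}: j=1,\ldots,k\},\ \ldots,\ \{a_{mj}+p\mathbb{Z}: j=1,\ldots,k\}$$ with $1\le a_{i1}<\cdots<a_{ik}\le p-1$ for all $i=1,\ldots,m$. Then $$\prod_{i=1}^m\prod_{1\le s<t\le k}(a_{it}-a_{is})\equiv\begin{cases}(-1)^{\frac{p+1}2\cdot\frac{p-1}{2m}+\lfloor\frac{p-3}4\rfloor}\left(\frac{p-1}2\right)!\pmod p&\text{if } p\equiv1\pmod{2m},\\(-1)^{\frac{p+1}2\cdot\frac{p-1-m}{2m}}\pmod p&\text{if } p\equiv1+m\pmod{2m}.\end{cases}$$ *)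

theory Defs
  imports "HOL-Number_Theory.Number_Theory"
begin

definition mpowers :: "nat \<Rightarrow> nat \<Rightarrow> int set" where
  "mpowers p m = {(x ^ m) mod int p | x. x \<in> {1..int p - 1}}"

definition cosets_mod :: "nat \<Rightarrow> int set \<Rightarrow> int set set" where
  "cosets_mod p H = {{(g * h) mod int p | h. h \<in> H} | g. g \<in> {1..int p - 1}}"

end

theory Submission
  imports Defs
begin

lemma fermat_int:
  fixes p :: nat and x :: int
  assumes "prime p" "\<not> int p dvd x"
  shows "[x ^ (p - 1) = 1] (mod int p)"
proof -
  have p1: "p > 1" using assms(1) prime_gt_1_nat by blast
  define y where "y = nat (x mod int p)"
  have xy: "int y = x mod int p" using p1 unfolding y_def by simp
  have "\<not> p dvd y"
  proof
    assume "p dvd y"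
    then have "int p dvd x mod int p" using xy by (metis of_nat_dvd_iff)
    then show False using assms(2) by (simp add: dvd_mod_iff)
  qed
  then have "[y ^ (p - 1) = 1] (mod p)" using fermat_theorem assms(1) by blast
  then have "[int y ^ (p - 1) = 1] (mod int p)"
    by (metis cong_int_iff of_nat_1 of_nat_power)
  then have "[(x mod int p) ^ (p - 1) = 1] (mod int p)" using xy by simp
  then show ?thesis by (simp add: cong_def power_mod)
qed

lemma cong_eq_range:
  fixes u v :: int
  assumes "[u = v] (mod n)" "0 \<le> u" "u < n" "0 \<le> v" "v < n"
  shows "u = v"
  using assms by (simp add: cong_def)

locale thm31 =
  fixes p k m :: nat and a :: "nat \<Rightarrow> nat \<Rightarrow> int"
  assumes prime: "prime p" and oddp: "odd p"
    and kpos: "k > 0" and mpos: "m > 0" and km: "k * m = p - 1"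
    and range: "\<forall>i\<in>{1..m}. \<forall>j\<in>{1..k}. 1 \<le> a i j \<and> a i j \<le> int p - 1"
    and sorted: "\<forall>i\<in>{1..m}. \<forall>s t. 1 \<le> s \<and> s < t \<and> t \<le> k \<longrightarrow> a i s < a i t"
    and distinct: "inj_on (\<lambda>i. a i ` {1..k}) {1..m}"
    and cosets: "(\<lambda>i. a i ` {1..k}) ` {1..m} = cosets_mod p (mpowers p m)"
begin

definition G :: "int set" where "G = {1..int p - 1}"
definition fib :: "int \<Rightarrow> int set" where "fib x = {y \<in> G. [y ^ k = x ^ k] (mod int p)}"
definition C :: "nat \<Rightarrow> int set" where "C i = a i ` {1..k}"

lemma p_gt2: "p > 2"
  using prime oddp prime_ge_2_nat[OF prime] by (metis dvd_refl le_neq_implies_less)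

lemma finG: "finite G" unfolding G_def by simp

lemma G_ndvd: "x \<in> G \<Longrightarrow> \<not> int p dvd x"
  unfolding G_def using zdvd_imp_le by fastforce

lemma fermatG: "x \<in> G \<Longrightarrow> [x ^ (p - 1) = 1] (mod int p)"
  using fermat_int[OF prime G_ndvd] .

lemma fib_fin: "finite (fib x)" unfolding fib_def using finG by simp

lemma fib_card: assumes "x \<in> G" shows "card (fib x) \<le> k"
proof -
  let ?A = "{y\<in>{..<p}. [y ^ k = nat x ^ k] (mod p)}"
  have inj: "inj_on nat (fib x)" unfolding fib_def G_def by (auto intro: inj_onI)
  have sub: "nat ` fib x \<subseteq> ?A"
  proof
    fix z assume "z \<in> nat ` fib x"
    then obtain y where y: "y \<in> fib x" "z = nat y" by blast
    then have yG: "y \<in> G" and c: "[y ^ k = x ^ k] (mod int p)" unfolding fib_def by auto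
    have "int (nat y ^ k) = y ^ k" using yG unfolding G_def by simp
    moreover have "int (nat x ^ k) = x ^ k" using assms unfolding G_def by simp
    ultimately have "[int (nat y ^ k) = int (nat x ^ k)] (mod int p)" using c by simp
    then have "[nat y ^ k = nat x ^ k] (mod p)" using cong_int_iff by blast
    moreover have "nat y < p" using yG unfolding G_def by auto
    ultimately show "z \<in> ?A" using y by simp
  qed
  have "card (fib x) = card (nat ` fib x)" using card_image[OF inj] by simp
  also have "\<dots> \<le> card ?A" by (rule card_mono) (simp, rule sub)
  also have "\<dots> \<le> k" using roots_mod_prime_bound[OF prime kpos] by simp
  finally show ?thesis .
qed

lemma C_sub: "i \<in> {1..m} \<Longrightarrow> C i \<subseteq> G"
  unfolding C_def G_def using range by auto

lemma a_mono: "i \<in> {1..m} \<Longrightarrow> s \<in> {1..k} \<Longrightarrow> t \<in> {1..k} \<Longrightarrow> a i s < a i t \<longleftrightarrow> s < t"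
  using sorted by (metis atLeastAtMost_iff linorder_neqE_nat order_less_asym order_less_irrefl)

lemma a_inj: "i \<in> {1..m} \<Longrightarrow> inj_on (a i) {1..k}"
  by (rule inj_onI) (metis a_mono linorder_neqE_nat order_less_irrefl)

lemma C_card: "i \<in> {1..m} \<Longrightarrow> card (C i) = k"
  unfolding C_def using card_image[OF a_inj] by simp

lemma coset_pow:
  assumes "g \<in> G" "z \<in> G"
  shows "[((g * (z ^ m mod int p)) mod int p) ^ k = g ^ k] (mod int p)"
proof -
  have "[(g * (z ^ m mod int p)) mod int p = g * z ^ m] (mod int p)"
    by (simp add: cong_def mod_mult_right_eq)
  then have "[((g * (z ^ m mod int p)) mod int p) ^ k = (g * z ^ m) ^ k] (mod int p)"
    by (rule cong_pow)
  also have "(g * z ^ m) ^ k = g ^ k * z ^ (m * k)"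
    by (simp add: power_mult_distrib power_mult)
  also have "m * k = p - 1" using km by (simp add: mult.commute)
  also have "[g ^ k * z ^ (p - 1) = g ^ k * 1] (mod int p)"
    by (rule cong_mult[OF cong_refl fermatG[OF assms(2)]])
  finally show ?thesis by simp
qed

lemma C_coset: "i \<in> {1..m} \<Longrightarrow> \<exists>g\<in>G. C i = {(g * h) mod int p | h. h \<in> mpowers p m}"
proof -
  assume "i \<in> {1..m}"
  then have "C i \<in> cosets_mod p (mpowers p m)" using cosets unfolding C_def by blast
  then show ?thesis unfolding cosets_mod_def G_def by blast
qed

lemma C_fib: assumes "i \<in> {1..m}" "x \<in> C i" "y \<in> C i" shows "[y ^ k = x ^ k] (mod int p)"
proof -
  obtain g where g: "g \<in> G" "C i = {(g * h) mod int p | h. h \<in> mpowers p m}"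
    using C_coset assms(1) by blast
  have *: "[w ^ k = g ^ k] (mod int p)" if "w \<in> C i" for w
  proof -
    from that g(2) have "w \<in> {(g * h) mod int p | h. h \<in> mpowers p m}" by simp
    then obtain h where h: "h \<in> mpowers p m" "w = (g * h) mod int p" by blast
    then obtain z where "z \<in> G" "h = z ^ m mod int p"
      unfolding mpowers_def G_def by blast
    then have "z \<in> G" "w = (g * (z ^ m mod int p)) mod int p" using h by auto
    then show ?thesis using coset_pow g(1) by simp
  qed
  show ?thesis using *[OF assms(2)] *[OF assms(3)] by (meson cong_sym cong_trans)
qed

lemma C_eq_fib: assumes "i \<in> {1..m}" "x \<in> C i" shows "C i = fib x"
proof (rule card_seteq[OF fib_fin])
  show "C i \<subseteq> fib x" using C_fib[OF assms] C_sub[OF assms(1)] unfolding fib_def by auto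
  show "card (fib x) \<le> card (C i)" using fib_card C_card[OF assms(1)] C_sub assms by auto
qed

lemma cover: assumes "x \<in> G" shows "\<exists>i\<in>{1..m}. x \<in> C i"
proof -
  let ?S = "{(x * h) mod int p | h. h \<in> mpowers p m}"
  have "?S \<in> cosets_mod p (mpowers p m)" using assms unfolding cosets_mod_def G_def by blast
  from this[folded cosets] obtain i where i: "i \<in> {1..m}" "C i = ?S" unfolding C_def by blast
  have "1 \<in> mpowers p m" unfolding mpowers_def using p_gt2
    by (auto intro!: exI[of _ 1])
  then have "(x * 1) mod int p \<in> ?S" by blast
  moreover have "(x * 1) mod int p = x" using assms unfolding G_def by simp
  ultimately have "x \<in> ?S" by simp
  then show ?thesis using i by blast
qed

lemma disj: assumes "i \<in> {1..m}" "j \<in> {1..m}" "x \<in> C i" "x \<in> C j" shows "i = j"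
proof -
  have "C i = C j" using C_eq_fib assms by metis
  then show ?thesis using distinct assms(1,2) unfolding C_def inj_on_def by blast
qed


definition S :: "(nat \<times> nat) set" where "S = {(s, t). 1 \<le> s \<and> s < t \<and> t \<le> k}"
definition P :: "(int \<times> int) set" where
  "P = {(x, y). x \<in> G \<and> y \<in> G \<and> x < y \<and> [y ^ k = x ^ k] (mod int p)}"

lemma finS: "finite S"
  by (rule finite_subset[of _ "{1..k} \<times> {1..k}"]) (auto simp: S_def)

lemma finP: "finite P"
  by (rule finite_subset[of _ "G \<times> G"]) (auto simp: P_def finG)

lemma bijP: "bij_betw (\<lambda>(i, st). (a i (fst st), a i (snd st))) (Sigma {1..m} (\<lambda>_. S)) P"
  unfolding bij_betw_def
proof (intro conjI)
  show "inj_on (\<lambda>(i, st). (a i (fst st), a i (snd st))) (Sigma {1..m} (\<lambda>_. S))"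
  proof (rule inj_onI)
    fix z w
    assume zA: "z \<in> Sigma {1..m} (\<lambda>_. S)" and wA: "w \<in> Sigma {1..m} (\<lambda>_. S)"
      and Ez: "(\<lambda>(i, st). (a i (fst st), a i (snd st))) z = (\<lambda>(i, st). (a i (fst st), a i (snd st))) w"
    obtain i s t where z: "z = (i, s, t)" by (metis prod_cases3)
    obtain j s' t' where w: "w = (j, s', t')" by (metis prod_cases3)
    have A: "(i, s, t) \<in> Sigma {1..m} (\<lambda>_. S)" "(j, s', t') \<in> Sigma {1..m} (\<lambda>_. S)"
      using zA wA z w by auto
    have E: "a i s = a j s'" "a i t = a j t'" using Ez z w by auto
    have i: "i \<in> {1..m}" "s \<in> {1..k}" "t \<in> {1..k}" using A by (auto simp: S_def)
    have j: "j \<in> {1..m}" "s' \<in> {1..k}" "t' \<in> {1..k}" using A by (auto simp: S_def)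
    have "a i s \<in> C i" using i unfolding C_def by auto
    moreover have "a i s \<in> C j" using j E unfolding C_def by auto
    ultimately
    have ij: "i = j" by (rule disj[OF i(1) j(1)])
    have "a i s = a i s'" "a i t = a i t'" using E ij by simp_all
    then have "s = s'" "t = t'" using inj_onD[OF a_inj[OF i(1)]] i j by auto
    then show "z = w" using ij z w by simp
  qed
  show "(\<lambda>(i, st). (a i (fst st), a i (snd st))) ` Sigma {1..m} (\<lambda>_. S) = P"
  proof (intro equalityI subsetI)
    fix z assume "z \<in> (\<lambda>(i, st). (a i (fst st), a i (snd st))) ` Sigma {1..m} (\<lambda>_. S)"
    then obtain i s t where A: "i \<in> {1..m}" "(s, t) \<in> S" "z = (a i s, a i t)" by auto
    have st: "s \<in> {1..k}" "t \<in> {1..k}" "s < t" using A by (auto simp: S_def)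
    have "a i s \<in> C i" "a i t \<in> C i" using st unfolding C_def by auto
    then show "z \<in> P" using A st C_sub[OF A(1)] C_fib[OF A(1)] a_mono[OF A(1)]
      unfolding P_def by auto
  next
    fix z assume "z \<in> P"
    then obtain x y where z: "z = (x, y)" "x \<in> G" "y \<in> G" "x < y" "[y ^ k = x ^ k] (mod int p)"
      unfolding P_def by auto
    obtain i where i: "i \<in> {1..m}" "x \<in> C i" using cover z(2) by blast
    have "y \<in> C i" using C_eq_fib[OF i] z unfolding fib_def by auto
    then obtain t where t: "t \<in> {1..k}" "y = a i t" unfolding C_def by auto
    obtain s where s: "s \<in> {1..k}" "x = a i s" using i(2) unfolding C_def by auto
    have "s < t" using a_mono[OF i(1) s(1) t(1)] s t z by simp
    then have "(i, s, t) \<in> Sigma {1..m} (\<lambda>_. S)" using i s t by (auto simp: S_def)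
    then show "z \<in> (\<lambda>(i, st). (a i (fst st), a i (snd st))) ` Sigma {1..m} (\<lambda>_. S)"
      using z s t by force
  qed
qed

lemma lhs_eq:
  "(\<Prod>i\<in>{1..m}. \<Prod>(s, t)\<in>{(s, t). 1 \<le> s \<and> s < t \<and> t \<le> k}. a i t - a i s)
   = (\<Prod>(x, y)\<in>P. y - x)"
proof -
  have "(\<Prod>i\<in>{1..m}. \<Prod>(s, t)\<in>{(s, t). 1 \<le> s \<and> s < t \<and> t \<le> k}. a i t - a i s)
      = (\<Prod>i\<in>{1..m}. \<Prod>st\<in>S. a i (snd st) - a i (fst st))"
    by (simp add: S_def split_def)
  also have "\<dots> = (\<Prod>z\<in>Sigma {1..m} (\<lambda>_. S). a (fst z) (snd (snd z)) - a (fst z) (fst (snd z)))"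
    by (subst prod.Sigma) (auto simp: finS split_def)
  also have "\<dots> = (\<Prod>z\<in>Sigma {1..m} (\<lambda>_. S).
      (\<lambda>(x, y). y - x) ((\<lambda>(i, st). (a i (fst st), a i (snd st))) z))"
    by (simp add: split_def)
  also have "\<dots> = (\<Prod>(x, y)\<in>P. y - x)"
    by (rule prod.reindex_bij_betw[OF bijP])
  finally show ?thesis .
qed

end


context thm31
begin

lemma primeI: "prime (int p)" using prime by simp

lemma G_coprime: "x \<in> G \<Longrightarrow> coprime x (int p)"
  using prime_imp_coprime[OF primeI G_ndvd] by (simp add: coprime_commute)

lemma G_modeq: "x \<in> G \<Longrightarrow> y \<in> G \<Longrightarrow> [x = y] (mod int p) \<Longrightarrow> x = y"
  unfolding G_def by (rule cong_eq_range) auto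

lemma mulG: assumes "c \<in> G" "x \<in> G" shows "(c * x) mod int p \<in> G"
proof -
  have "\<not> int p dvd c * x" using G_ndvd assms primeI prime_dvd_mult_iff by blast
  then have "(c * x) mod int p \<noteq> 0" by (simp add: dvd_eq_mod_eq_0)
  moreover have "0 \<le> (c * x) mod int p" "(c * x) mod int p < int p" using p_gt2 by auto
  ultimately show ?thesis unfolding G_def by auto
qed

definition iv :: "int \<Rightarrow> int" where "iv c = c ^ (p - 2) mod int p"

lemma iv_mult: assumes "c \<in> G" shows "[c * iv c = 1] (mod int p)"
proof -
  have "[c * iv c = c * c ^ (p - 2)] (mod int p)"
    unfolding iv_def by (simp add: cong_def mod_mult_right_eq)
  also have "c * c ^ (p - 2) = c ^ (p - 1)"
  proof -
    have "p - 1 = Suc (p - 2)" using p_gt2 by simp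
    then show ?thesis by simp
  qed
  also have "[\<dots> = 1] (mod int p)" using fermatG[OF assms] .
  finally show ?thesis .
qed

lemma ivG: assumes "c \<in> G" shows "iv c \<in> G"
proof -
  have "iv c \<noteq> 0" using iv_mult[OF assms] p_gt2 by (auto simp: cong_def)
  moreover have "0 \<le> iv c" "iv c < int p" using p_gt2 unfolding iv_def by auto
  ultimately show ?thesis unfolding G_def by auto
qed

lemma iv_unique: assumes "c \<in> G" "d \<in> G" "[c * d = 1] (mod int p)" shows "d = iv c"
proof -
  have "[d * (c * iv c) = d * 1] (mod int p)" by (rule cong_mult[OF cong_refl iv_mult[OF assms(1)]])
  moreover have "[(c * d) * iv c = 1 * iv c] (mod int p)" by (rule cong_mult[OF assms(3) cong_refl])
  moreover have "d * (c * iv c) = (c * d) * iv c" by (simp add: ac_simps)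
  ultimately have "[d * 1 = 1 * iv c] (mod int p)"
    using cong_sym cong_trans by metis
  then have "[d = iv c] (mod int p)" by simp
  then show ?thesis using G_modeq assms ivG by blast
qed

lemma iv_iv: "c \<in> G \<Longrightarrow> iv (iv c) = c"
  using iv_unique[OF ivG] iv_mult by (metis mult.commute)

lemma oneG: "1 \<in> G" unfolding G_def using p_gt2 by auto
lemma pm1G: "int p - 1 \<in> G" unfolding G_def using p_gt2 by auto

lemma iv_1: "iv 1 = 1" using iv_unique[OF oneG oneG] by simp

lemma iv_pm1: "iv (int p - 1) = int p - 1"
proof -
  have "(int p - 1) * (int p - 1) = 1 + int p * (int p - 2)" by (simp add: algebra_simps)
  then have "[(int p - 1) * (int p - 1) = 1] (mod int p)" by (simp add: cong_def)
  then show ?thesis using iv_unique[OF pm1G pm1G] by simp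
qed

lemma iv_fix: assumes "c \<in> G" "iv c = c" shows "c = 1 \<or> c = int p - 1"
proof -
  have "[c * c = 1] (mod int p)" using iv_mult[OF assms(1)] assms(2) by simp
  then have "[c = 1] (mod int p) \<or> [c = - 1] (mod int p)"
    using cong_square[OF primeI] assms(1) unfolding G_def by auto
  moreover have "[- 1 = int p - 1] (mod int p)" by (simp add: cong_def)
  ultimately have "[c = 1] (mod int p) \<or> [c = int p - 1] (mod int p)" using cong_trans by blast
  then show ?thesis using G_modeq assms(1) oneG pm1G by blast
qed

definition K :: "int set" where "K = {c \<in> G. c \<noteq> 1 \<and> [c ^ k = 1] (mod int p)}"
definition Kp :: "int set" where "Kp = {c \<in> K. c < iv c}"
definition Km :: "int set" where "Km = {c \<in> K. iv c < c}"

lemma finK: "finite K" unfolding K_def using finG by simp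

lemma card_fib1: "card (fib 1) = k"
  using cover[OF oneG] C_eq_fib C_card by metis

lemma K_eq: "K = fib 1 - {1}" unfolding K_def fib_def by auto

lemma card_K: "card K = k - 1"
proof -
  have "1 \<in> fib 1" unfolding fib_def using oneG by simp
  then show ?thesis using K_eq card_fib1 fib_fin by simp
qed

lemma ivK: assumes "c \<in> K" shows "iv c \<in> K"
proof -
  have cG: "c \<in> G" and ck: "[c ^ k = 1] (mod int p)" and c1: "c \<noteq> 1" using assms unfolding K_def by auto
  have "[(iv c) ^ k = c ^ k * (iv c) ^ k] (mod int p)"
    using cong_mult[OF cong_sym[OF ck] cong_refl[of "iv c ^ k"]] by simp
  also have "c ^ k * (iv c) ^ k = (c * iv c) ^ k" by (simp add: power_mult_distrib)
  also have "[\<dots> = 1 ^ k] (mod int p)" by (rule cong_pow[OF iv_mult[OF cG]])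
  finally have "[(iv c) ^ k = 1] (mod int p)" by simp
  moreover have "iv c \<noteq> 1" using iv_iv[OF cG] c1 iv_1 by metis
  ultimately show ?thesis using ivG[OF cG] unfolding K_def by auto
qed

lemma pm1_K_iff: "int p - 1 \<in> K \<longleftrightarrow> even k"
proof -
  have "[(int p - 1) ^ k = (- 1) ^ k] (mod int p)" by (rule cong_pow) (simp add: cong_def)
  moreover have "\<not> [- 1 = 1] (mod int p)"
  proof
    assume "[- 1 = 1] (mod int p)"
    then have "int p dvd 2" by (simp add: cong_iff_dvd_diff)
    then show False using p_gt2 by (metis dvd_imp_le of_nat_dvd_iff of_nat_numeral zero_less_numeral not_less)
  qed
  ultimately have "[(int p - 1) ^ k = 1] (mod int p) \<longleftrightarrow> even k"
  proof (cases "even k")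
    case True
    then show ?thesis using \<open>[(int p - 1) ^ k = (- 1) ^ k] (mod int p)\<close> by simp
  next
    case False
    then have "[(int p - 1) ^ k = - 1] (mod int p)"
      using \<open>[(int p - 1) ^ k = (- 1) ^ k] (mod int p)\<close> by simp
    then show ?thesis using False \<open>\<not> [- 1 = 1] (mod int p)\<close>
      by (meson cong_sym cong_trans)
  qed
  moreover have "int p - 1 \<noteq> 1" using p_gt2 by simp
  ultimately show ?thesis using pm1G unfolding K_def by auto
qed

lemma K_split: "K = Kp \<union> Km \<union> (K \<inter> {int p - 1})"
  unfolding Kp_def Km_def using iv_fix iv_pm1 K_def by (auto, metis linorder_neqE)

lemma card_Kp: "card Kp = (k - 1) div 2"
proof -
  have bij: "bij_betw iv Kp Km"
  proof (rule bij_betw_byWitness[where f' = iv])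
    show "\<forall>a\<in>Kp. iv (iv a) = a" "\<forall>a\<in>Km. iv (iv a) = a" using iv_iv unfolding Kp_def Km_def K_def by auto
    show "iv ` Kp \<subseteq> Km" using ivK iv_iv unfolding Kp_def Km_def K_def by auto
    show "iv ` Km \<subseteq> Kp" using ivK iv_iv unfolding Kp_def Km_def K_def by auto
  qed
  have c1: "card Km = card Kp" using bij_betw_same_card[OF bij] by simp
  have d1: "Kp \<inter> Km = {}" unfolding Kp_def Km_def by auto
  have d2: "(Kp \<union> Km) \<inter> (K \<inter> {int p - 1}) = {}" unfolding Kp_def Km_def using iv_pm1 by auto
  have fin: "finite Kp" "finite Km" unfolding Kp_def Km_def using finK by auto
  have "card K = card Kp + card Km + card (K \<inter> {int p - 1})"
    by (subst K_split) (simp add: card_Un_disjoint d1 d2 fin card_Un_disjoint[OF _ _ d2] finK)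
  moreover have "card (K \<inter> {int p - 1}) = (if even k then 1 else 0)"
    using pm1_K_iff by auto
  ultimately have "k - 1 = 2 * card Kp + (if even k then 1 else 0)" using card_K c1 by simp
  then show ?thesis using kpos by (cases "even k") auto
qed

end


context thm31
begin

lemma mul_ne: assumes "c \<in> G" "c \<noteq> 1" "x \<in> G" shows "(c * x) mod int p \<noteq> x"
proof
  assume "(c * x) mod int p = x"
  then have "[c * x = 1 * x] (mod int p)" using assms(3) unfolding G_def by (simp add: cong_def)
  then have "[c = 1] (mod int p)" using cong_mult_rcancel G_coprime[OF assms(3)] by blast
  then show False using G_modeq assms oneG by blast
qed

lemma mul_neg: assumes "c \<in> G" "x \<in> G"
  shows "(c * (int p - x)) mod int p = int p - (c * x) mod int p"
proof -
  let ?y = "(c * x) mod int p"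
  have yG: "?y \<in> G" using mulG assms .
  have "[c * (int p - x) = - (c * x)] (mod int p)"
    by (simp add: cong_iff_dvd_diff algebra_simps)
  moreover have "[- (c * x) = - ?y] (mod int p)" by (simp add: cong_def mod_minus_eq)
  moreover have "[- ?y = int p - ?y] (mod int p)" by (simp add: cong_iff_dvd_diff)
  ultimately have "[c * (int p - x) = int p - ?y] (mod int p)" using cong_trans by blast
  then have "(c * (int p - x)) mod int p = (int p - ?y) mod int p" by (simp add: cong_def)
  also have "\<dots> = int p - ?y" using yG unfolding G_def by (intro mod_pos_pos_trivial) auto
  finally show ?thesis .
qed

lemma negG: "x \<in> G \<Longrightarrow> int p - x \<in> G" unfolding G_def by auto

lemma inner_card: assumes "c \<in> G" "c \<noteq> 1"
  shows "card {x \<in> G. (c * x) mod int p < x} = (p - 1) div 2"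
proof -
  define A where "A = {x \<in> G. (c * x) mod int p < x}"
  define B where "B = G - A"
  have key: "int p - x \<in> A \<longleftrightarrow> x \<notin> A" if "x \<in> G" for x
  proof -
    have "(c * (int p - x)) mod int p < int p - x \<longleftrightarrow> x < (c * x) mod int p"
      using mul_neg[OF assms(1) that] by simp
    also have "\<dots> \<longleftrightarrow> \<not> (c * x) mod int p < x" using mul_ne[OF assms that] by auto
    finally show ?thesis unfolding A_def using negG[OF that] that by auto
  qed
  have inj: "inj_on (\<lambda>x. int p - x) X" for X by (rule inj_onI) simp
  have finA: "finite A" "finite B" unfolding A_def B_def using finG by auto
  have "(\<lambda>x. int p - x) ` A \<subseteq> B"
  proof
    fix z assume "z \<in> (\<lambda>x. int p - x) ` A"
    then obtain x where x: "x \<in> A" "z = int p - x" by blast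
    have xG: "x \<in> G" using x(1) unfolding A_def by simp
    then have "z \<notin> A" using key[OF xG] x by simp
    then show "z \<in> B" using negG[OF xG] x unfolding B_def by simp
  qed
  then have c1: "card A \<le> card B" using card_inj_on_le[OF inj] finA by blast
  have "(\<lambda>x. int p - x) ` B \<subseteq> A"
  proof
    fix z assume "z \<in> (\<lambda>x. int p - x) ` B"
    then obtain x where x: "x \<in> B" "z = int p - x" by blast
    have xG: "x \<in> G" "x \<notin> A" using x(1) unfolding B_def by auto
    then show "z \<in> A" using key[OF xG(1)] x by simp
  qed
  then have c2: "card B \<le> card A" using card_inj_on_le[OF inj] finA by blast
  have AG: "A \<subseteq> G" unfolding A_def by auto
  have "card B = card G - card A" unfolding B_def using card_Diff_subset[OF finA(1) AG] .
  moreover have "card A \<le> card G" using card_mono[OF finG AG] .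
  ultimately have "card G = card A + card B" by simp
  moreover have "card G = p - 1" unfolding G_def using p_gt2 by simp
  ultimately show ?thesis using c1 c2 unfolding A_def by simp
qed

lemma prodG_fact: "(\<Prod>x\<in>G. x) = fact (p - 1)"
proof -
  have "fact (p - 1) = (\<Prod>x\<in>{1..p - 1}. int x)" by (simp add: fact_prod)
  also have "\<dots> = (\<Prod>x\<in>{int 1..int (p - 1)}. x)" by (rule prod_int_eq)
  also have "{int 1..int (p - 1)} = G" unfolding G_def using p_gt2 by simp
  finally show ?thesis by simp
qed

lemma inner_prod: assumes "c \<in> G" "c \<noteq> 1"
  shows "[(\<Prod>x\<in>G. \<bar>(c * x) mod int p - x\<bar>) = (-1) ^ ((p - 1) div 2 + 1)] (mod int p)"
proof -
  define A where "A = {x \<in> G. (c * x) mod int p < x}"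
  have "(\<Prod>x\<in>G. \<bar>(c * x) mod int p - x\<bar>)
      = (\<Prod>x\<in>G. (if x \<in> A then -1 else 1) * ((c * x) mod int p - x))"
    by (rule prod.cong) (auto simp: A_def)
  also have "\<dots> = (\<Prod>x\<in>G. (if x \<in> A then -1 else 1)) * (\<Prod>x\<in>G. (c * x) mod int p - x)"
    by (rule prod.distrib)
  also have "(\<Prod>x\<in>G. (if x \<in> A then -1 else 1)) = ((-1::int) ^ card A)"
  proof -
    have "(\<Prod>x\<in>G. (if x \<in> A then -1 else 1)) = (\<Prod>x\<in>G \<inter> {x. x \<in> A}. (-1::int)) * (\<Prod>x\<in>G \<inter> - {x. x \<in> A}. 1)"
      by (rule prod.If_cases[OF finG])
    also have "G \<inter> {x. x \<in> A} = A" unfolding A_def by auto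
    finally show ?thesis by simp
  qed
  also have "card A = (p - 1) div 2" unfolding A_def by (rule inner_card[OF assms])
  finally have eq: "(\<Prod>x\<in>G. \<bar>(c * x) mod int p - x\<bar>) = (-1) ^ ((p - 1) div 2) * (\<Prod>x\<in>G. (c * x) mod int p - x)" .
  have "[(\<Prod>x\<in>G. (c * x) mod int p - x) = (\<Prod>x\<in>G. (c - 1) * x)] (mod int p)"
    by (rule cong_prod) (simp add: cong_def mod_diff_left_eq left_diff_distrib)
  also have "(\<Prod>x\<in>G. (c - 1) * x) = (c - 1) ^ card G * (\<Prod>x\<in>G. x)"
    by (simp add: prod.distrib)
  also have "card G = p - 1" unfolding G_def using p_gt2 by simp
  also have "[(c - 1) ^ (p - 1) * (\<Prod>x\<in>G. x) = 1 * (- 1)] (mod int p)"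
  proof (rule cong_mult)
    have "c - 1 \<in> G" using assms unfolding G_def by auto
    then show "[(c - 1) ^ (p - 1) = 1] (mod int p)" by (rule fermatG)
    show "[(\<Prod>x\<in>G. x) = - 1] (mod int p)" unfolding prodG_fact using wilson_theorem[OF prime] by simp
  qed
  finally have "[(\<Prod>x\<in>G. (c * x) mod int p - x) = - 1] (mod int p)" by simp
  then have "[(-1) ^ ((p - 1) div 2) * (\<Prod>x\<in>G. (c * x) mod int p - x) = (-1) ^ ((p - 1) div 2) * (- 1)] (mod int p)"
    by (rule cong_mult[OF cong_refl])
  then show ?thesis unfolding eq by simp
qed

end


context thm31
begin

definition N :: "(int \<times> int) set" where "N = {(x, y) \<in> P. x + y = int p}"
definition Phi :: "int \<times> int \<Rightarrow> int \<times> int" where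
  "Phi = (\<lambda>(c, x). (min x ((c * x) mod int p), max x ((c * x) mod int p)))"

lemma Kp_props: assumes "c \<in> Kp"
  shows "c \<in> K" "c \<in> G" "c \<noteq> 1" "c \<noteq> int p - 1" "[c ^ k = 1] (mod int p)" "c < iv c"
  using assms iv_pm1 unfolding Kp_def K_def by auto

lemma mulpow: assumes "c \<in> G" "[c ^ k = 1] (mod int p)" "x \<in> G"
  shows "[((c * x) mod int p) ^ k = x ^ k] (mod int p)"
proof -
  have "[((c * x) mod int p) ^ k = (c * x) ^ k] (mod int p)" by (rule cong_pow) (simp add: cong_def)
  also have "(c * x) ^ k = c ^ k * x ^ k" by (simp add: power_mult_distrib)
  also have "[c ^ k * x ^ k = 1 * x ^ k] (mod int p)" by (rule cong_mult[OF assms(2) cong_refl])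
  finally show ?thesis by simp
qed

lemma neg_one_cong: "[- 1 = int p - 1] (mod int p)" by (simp add: cong_def)

lemma mul_eq_neg: assumes "c \<in> G" "x \<in> G" "(c * x) mod int p = int p - x" shows "c = int p - 1"
proof -
  have "(int p - x) mod int p = (int p mod int p - x) mod int p" by (simp only: mod_diff_left_eq)
  then have "(int p - x) mod int p = (- x) mod int p" by simp
  moreover have "(int p - x) mod int p = int p - x" using assms(2) unfolding G_def
    by (intro mod_pos_pos_trivial) auto
  ultimately have "[c * x = (- 1) * x] (mod int p)" using assms(3) unfolding cong_def by simp
  then have "[c = - 1] (mod int p)" using cong_mult_rcancel G_coprime[OF assms(2)] by blast
  then have "[c = int p - 1] (mod int p)" using neg_one_cong cong_trans by blast
  then show ?thesis using G_modeq assms(1) pm1G by blast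
qed

lemma Phi_in: assumes "c \<in> Kp" "x \<in> G" shows "Phi (c, x) \<in> P - N"
proof -
  note c = Kp_props[OF assms(1)]
  let ?y = "(c * x) mod int p"
  have yG: "?y \<in> G" using mulG c(2) assms(2) .
  have ne: "?y \<noteq> x" using mul_ne c(2,3) assms(2) .
  have pw: "[?y ^ k = x ^ k] (mod int p)" using mulpow c(2,5) assms(2) .
  have "Phi (c, x) \<in> P"
  proof (cases "x < ?y")
    case True
    then show ?thesis unfolding Phi_def P_def using yG assms(2) pw by auto
  next
    case False
    then have "?y < x" using ne by auto
    then show ?thesis unfolding Phi_def P_def using yG assms(2) cong_sym[OF pw] by auto
  qed
  moreover have "Phi (c, x) \<notin> N"
  proof
    assume "Phi (c, x) \<in> N"
    then have "x + ?y = int p" unfolding N_def Phi_def by (auto simp: min_def max_def split: if_splits)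
    then have "?y = int p - x" by simp
    then show False using mul_eq_neg c(2,4) assms(2) by blast
  qed
  ultimately show ?thesis by simp
qed

lemma Phi_inj: "inj_on Phi (Kp \<times> G)"
proof (rule inj_onI)
  fix z w assume z: "z \<in> Kp \<times> G" and w: "w \<in> Kp \<times> G" and E: "Phi z = Phi w"
  obtain c x where cx: "z = (c, x)" "c \<in> Kp" "x \<in> G" using z by auto
  obtain d u where du: "w = (d, u)" "d \<in> Kp" "u \<in> G" using w by auto
  note c = Kp_props[OF cx(2)] and d = Kp_props[OF du(2)]
  let ?y = "(c * x) mod int p" and ?v = "(d * u) mod int p"
  have E2: "min x ?y = min u ?v" "max x ?y = max u ?v" using E cx du unfolding Phi_def by auto
  then have cases: "(x = u \<and> ?y = ?v) \<or> (x = ?v \<and> ?y = u)"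
    by (auto simp: min_def max_def split: if_splits)
  then show "z = w"
  proof
    assume A: "x = u \<and> ?y = ?v"
    then have "[c * x = d * x] (mod int p)" unfolding cong_def by (metis (no_types, lifting))
    then have "[c = d] (mod int p)" using cong_mult_rcancel G_coprime[OF cx(3)] by blast
    then have "c = d" using G_modeq c(2) d(2) by blast
    then show ?thesis using cx du A by simp
  next
    assume A: "x = ?v \<and> ?y = u"
    have "[d * u = x] (mod int p)" using A by (simp add: cong_def)
    moreover have "[u = c * x] (mod int p)" using A unfolding cong_def by (metis mod_mod_trivial)
    then have "[d * u = d * (c * x)] (mod int p)" by (intro cong_mult cong_refl)
    ultimately have "[(d * c) * x = 1 * x] (mod int p)" by (metis cong_sym cong_trans mult.assoc mult_1)
    then have "[d * c = 1] (mod int p)" using cong_mult_rcancel G_coprime[OF cx(3)] by blast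
    then have "c = iv d" using iv_unique d(2) c(2) by blast
    then have "iv c = d" using iv_iv d(2) by simp
    then show ?thesis using c(6) d(6) \<open>c = iv d\<close> by simp
  qed
qed

lemma Phi_surj: "P - N \<subseteq> Phi ` (Kp \<times> G)"
proof
  fix z assume z: "z \<in> P - N"
  then obtain x y where xy: "z = (x, y)" "x \<in> G" "y \<in> G" "x < y" "[y ^ k = x ^ k] (mod int p)"
    "x + y \<noteq> int p"
    unfolding P_def N_def by auto
  define c where "c = (y * iv x) mod int p"
  have cG: "c \<in> G" unfolding c_def using mulG xy(3) ivG xy(2) by blast
  have "[c * x = (y * iv x) * x] (mod int p)" unfolding c_def by (intro cong_mult) (auto simp: cong_def)
  also have "(y * iv x) * x = y * (x * iv x)" by (simp add: ac_simps)
  also have "[y * (x * iv x) = y * 1] (mod int p)" by (intro cong_mult cong_refl iv_mult xy(2))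
  finally have cx: "[c * x = y] (mod int p)" by simp
  then have cxy: "(c * x) mod int p = y" using xy(3) unfolding G_def by (simp add: cong_def)
  have c1: "c \<noteq> 1" using cxy xy(2,4) unfolding G_def by auto
  have "[c ^ k = (y * iv x) ^ k] (mod int p)" unfolding c_def by (rule cong_pow) (simp add: cong_def)
  also have "(y * iv x) ^ k = y ^ k * iv x ^ k" by (simp add: power_mult_distrib)
  also have "[y ^ k * iv x ^ k = x ^ k * iv x ^ k] (mod int p)" by (rule cong_mult[OF xy(5) cong_refl])
  also have "x ^ k * iv x ^ k = (x * iv x) ^ k" by (simp add: power_mult_distrib)
  also have "[(x * iv x) ^ k = 1 ^ k] (mod int p)" by (rule cong_pow[OF iv_mult[OF xy(2)]])
  finally have ck: "[c ^ k = 1] (mod int p)" by simp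
  have cpm: "c \<noteq> int p - 1"
  proof
    assume "c = int p - 1"
    then have "[c * x = (- 1) * x] (mod int p)" using neg_one_cong by (intro cong_mult) (auto simp: cong_sym)
    then have "[y = - x] (mod int p)" using cx by (metis cong_sym cong_trans mult_minus1)
    then have "int p dvd x + y" by (simp add: cong_iff_dvd_diff add.commute)
    moreover have "0 < x + y" "x + y < 2 * int p" using xy unfolding G_def by auto
    ultimately obtain q where q: "x + y = int p * q" "0 < int p * q" "int p * q < int p * 2"
      by (metis dvd_def mult.commute)
    have pp: "0 < int p" using p_gt2 by simp
    have "0 < q" using q(2) pp zero_less_mult_pos by blast
    moreover have "q < 2" using q(3) pp mult_less_cancel_left_pos by blast
    ultimately have "q = 1" by simp
    then have "x + y = int p" using q(1) by simp
    then show False using xy(6) by simp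
  qed
  have cK: "c \<in> K" unfolding K_def using cG c1 ck by simp
  have ivne: "iv c \<noteq> c" using iv_fix cG c1 cpm by blast
  show "z \<in> Phi ` (Kp \<times> G)"
  proof (cases "c < iv c")
    case True
    then have "c \<in> Kp" using cK unfolding Kp_def by simp
    moreover have "Phi (c, x) = z" unfolding Phi_def using cxy xy by simp
    ultimately show ?thesis using xy(2) by force
  next
    case False
    then have lt: "iv c < c" using ivne by simp
    have "iv c \<in> Kp" using ivK[OF cK] lt iv_iv[OF cG] unfolding Kp_def by simp
    moreover have "(iv c * y) mod int p = x"
    proof -
      have "[iv c * y = iv c * (c * x)] (mod int p)" by (intro cong_mult cong_refl cong_sym[OF cx])
      also have "iv c * (c * x) = (c * iv c) * x" by (simp add: ac_simps)
      also have "[(c * iv c) * x = 1 * x] (mod int p)" by (intro cong_mult cong_refl iv_mult cG)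
      finally show ?thesis using xy(2) unfolding G_def by (simp add: cong_def)
    qed
    then have "Phi (iv c, y) = z" unfolding Phi_def using xy by simp
    ultimately show ?thesis using xy(3) by force
  qed
qed

lemma Phi_bij: "bij_betw Phi (Kp \<times> G) (P - N)"
  unfolding bij_betw_def using Phi_inj Phi_in Phi_surj by auto

lemma prod_PN: "(\<Prod>(x, y)\<in>P - N. y - x) = (\<Prod>c\<in>Kp. \<Prod>x\<in>G. \<bar>(c * x) mod int p - x\<bar>)"
proof -
  have "(\<Prod>(x, y)\<in>P - N. y - x) = (\<Prod>z\<in>Kp \<times> G. (\<lambda>(x, y). y - x) (Phi z))"
    by (rule prod.reindex_bij_betw[OF Phi_bij, symmetric])
  also have "\<dots> = (\<Prod>z\<in>Kp \<times> G. (\<lambda>c x. \<bar>(c * x) mod int p - x\<bar>) (fst z) (snd z))"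
    by (rule prod.cong) (auto simp: Phi_def)
  also have "\<dots> = (\<Prod>c\<in>Kp. \<Prod>x\<in>G. \<bar>(c * x) mod int p - x\<bar>)"
    by (simp add: prod.cartesian_product split_def)
  finally show ?thesis .
qed

lemma prod_PN_cong: "[(\<Prod>(x, y)\<in>P - N. y - x) = ((-1) ^ ((p - 1) div 2 + 1)) ^ ((k - 1) div 2)] (mod int p)"
proof -
  have "[(\<Prod>c\<in>Kp. \<Prod>x\<in>G. \<bar>(c * x) mod int p - x\<bar>) = (\<Prod>c\<in>Kp. (-1) ^ ((p - 1) div 2 + 1))] (mod int p)"
    by (rule cong_prod) (use Kp_props inner_prod in blast)
  then show ?thesis unfolding prod_PN by (simp add: card_Kp)
qed

end


lemma card_E2:
  fixes p :: nat assumes prime: "prime p" and p_gt2: "2 < p" and oddp: "odd p"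
  shows "card (GAUSS.E p 2) = (p - 1) div 2 - (p - 1) div 2 div 2"
proof -
  interpret GAUSS p 2 using prime p_gt2 by unfold_locales (auto simp: cong_def)
  define hh where "hh = (int p - 1) div 2"
  have hh: "2 * hh < int p" "hh = int ((p - 1) div 2)" unfolding hh_def using oddp p_gt2
    by (auto simp: zdiv_int)
  have "E = (\<lambda>x. x * 2) ` {hh div 2 + 1..hh}"
  proof (intro equalityI subsetI)
    fix z assume "z \<in> E"
    then obtain x where x: "x \<in> A" "z = (x * 2) mod int p" "hh < z"
      unfolding E_def C_def B_def hh_def by auto
    have "0 < x" "x \<le> hh" using x(1) unfolding A_def hh_def by auto
    then have "z = x * 2" using x(2) hh by simp
    then show "z \<in> (\<lambda>x. x * 2) ` {hh div 2 + 1..hh}" using x \<open>x \<le> hh\<close> by auto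
  next
    fix z assume "z \<in> (\<lambda>x. x * 2) ` {hh div 2 + 1..hh}"
    then obtain x where x: "x \<in> {hh div 2 + 1..hh}" "z = x * 2" by blast
    have "0 < x" using x(1) hh by auto
    then have "x \<in> A" using x(1) unfolding A_def hh_def by auto
    moreover have "(x * 2) mod int p = x * 2" using x(1) hh \<open>0 < x\<close> by simp
    moreover have "hh < x * 2" using x(1) by auto
    ultimately show "z \<in> E" unfolding E_def C_def B_def hh_def using x(2) by force
  qed
  then have "card E = card {hh div 2 + 1..hh}" by (simp add: card_image inj_on_def)
  also have "\<dots> = nat (hh - hh div 2)" by simp
  also have "\<dots> = (p - 1) div 2 - (p - 1) div 2 div 2"
  proof -
    have e: "hh div 2 = int ((p - 1) div 2 div 2)" using hh(2) by (simp add: zdiv_int)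
    show ?thesis by (simp only: e) (simp add: hh(2) of_nat_diff[symmetric] del: of_nat_diff)
  qed
  finally show ?thesis .
qed

lemma two_pow:
  fixes p :: nat assumes prime: "prime p" and p_gt2: "2 < p" and oddp: "odd p"
  shows "[2 ^ ((p - 1) div 2) = (-1) ^ ((p - 1) div 2 - (p - 1) div 2 div 2)] (mod int p)"
proof -
  interpret GAUSS p 2 using prime p_gt2 by unfold_locales (auto simp: cong_def)
  have "nat ((int p - 1) div 2) = (p - 1) div 2" using p_gt2 by (simp add: zdiv_int nat_div_distrib)
  then show ?thesis using pre_gauss_lemma card_E2[OF prime p_gt2 oddp] by simp
qed


context thm31
begin

lemma N_sub: "N \<subseteq> P" unfolding N_def by auto

lemma T_split: "(\<Prod>(x, y)\<in>P. y - x) = (\<Prod>(x, y)\<in>P - N. y - x) * (\<Prod>(x, y)\<in>N. y - x)"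
  by (rule prod.subset_diff[OF N_sub finP])

lemma N_odd: assumes "odd k" shows "N = {}"
proof (rule ccontr)
  assume "N \<noteq> {}"
  then obtain x y where xy: "x \<in> G" "y \<in> G" "[y ^ k = x ^ k] (mod int p)" "x + y = int p"
    unfolding N_def P_def by auto
  have "[y = - x] (mod int p)" using xy(4) by (simp add: cong_iff_dvd_diff add.commute)
  then have "[y ^ k = (- x) ^ k] (mod int p)" by (rule cong_pow)
  then have "[y ^ k = - (x ^ k)] (mod int p)" using assms by simp
  then have "[x ^ k = - (x ^ k)] (mod int p)" using xy(3) by (meson cong_sym cong_trans)
  then have "int p dvd 2 * x ^ k" by (simp add: cong_iff_dvd_diff)
  then have "int p dvd 2 \<or> int p dvd x ^ k" using primeI prime_dvd_mult_iff by blast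
  moreover have "\<not> int p dvd 2" using p_gt2 by (metis dvd_imp_le of_nat_dvd_iff of_nat_numeral zero_less_numeral not_less)
  moreover have "\<not> int p dvd x ^ k" using prime_dvd_power[OF primeI] G_ndvd[OF xy(1)] by blast
  ultimately show False by blast
qed

lemma N_prod: assumes "even k"
  shows "(\<Prod>(x, y)\<in>N. y - x) = (\<Prod>x\<in>{1..(p - 1) div 2}. int p - 2 * int x)"
proof -
  let ?f = "\<lambda>x::nat. (int x, int p - int x)"
  have inj: "inj_on ?f {1..(p - 1) div 2}" by (rule inj_onI) simp
  have img: "?f ` {1..(p - 1) div 2} = N"
  proof (intro equalityI subsetI)
    fix z assume "z \<in> ?f ` {1..(p - 1) div 2}"
    then obtain x where x: "x \<in> {1..(p - 1) div 2}" "z = ?f x" by blast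
    have xG: "int x \<in> G" using x(1) unfolding G_def by auto
    have "[int p - int x = - int x] (mod int p)" by (simp add: cong_iff_dvd_diff)
    then have "[(int p - int x) ^ k = (- int x) ^ k] (mod int p)" by (rule cong_pow)
    then have "[(int p - int x) ^ k = int x ^ k] (mod int p)" using assms by simp
    moreover have "int x < int p - int x" using x(1) oddp by auto
    ultimately show "z \<in> N" unfolding N_def P_def using x xG negG[OF xG] by auto
  next
    fix z assume "z \<in> N"
    then obtain x y where xy: "z = (x, y)" "x \<in> G" "x < y" "x + y = int p"
      unfolding N_def P_def by auto
    have "nat x \<in> {1..(p - 1) div 2}" using xy oddp unfolding G_def by auto
    moreover have "z = ?f (nat x)" using xy unfolding G_def by auto
    ultimately show "z \<in> ?f ` {1..(p - 1) div 2}" by blast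
  qed
  have "(\<Prod>(x, y)\<in>N. y - x) = (\<Prod>x\<in>{1..(p - 1) div 2}. (\<lambda>(x, y). y - x) (?f x))"
    unfolding img[symmetric] by (rule prod.reindex[OF inj, unfolded comp_def])
  then show ?thesis by simp
qed

end


theorem theorem3p1:
  fixes p k m :: nat and a :: "nat \<Rightarrow> nat \<Rightarrow> int"
  assumes "prime p" and "odd p"
    and "k > 0" and "m > 0" and "k * m = p - 1"
    and range: "\<forall>i\<in>{1..m}. \<forall>j\<in>{1..k}. 1 \<le> a i j \<and> a i j \<le> int p - 1"
    and sorted: "\<forall>i\<in>{1..m}. \<forall>s t. 1 \<le> s \<and> s < t \<and> t \<le> k \<longrightarrow> a i s < a i t"
    and distinct: "inj_on (\<lambda>i. a i ` {1..k}) {1..m}"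
    and cosets: "(\<lambda>i. a i ` {1..k}) ` {1..m} = cosets_mod p (mpowers p m)"
  shows "([p = 1] (mod 2 * m) \<longrightarrow>
           [(\<Prod>i\<in>{1..m}. \<Prod>(s, t)\<in>{(s, t). 1 \<le> s \<and> s < t \<and> t \<le> k}. a i t - a i s)
             = (-1) ^ ((p + 1) div 2 * ((p - 1) div (2 * m)) + (p - 3) div 4)
               * fact ((p - 1) div 2)] (mod int p))
       \<and> ([p = 1 + m] (mod 2 * m) \<longrightarrow>
           [(\<Prod>i\<in>{1..m}. \<Prod>(s, t)\<in>{(s, t). 1 \<le> s \<and> s < t \<and> t \<le> k}. a i t - a i s)
             = (-1) ^ ((p + 1) div 2 * ((p - 1 - m) div (2 * m)))] (mod int p))"
proof -
  interpret L: thm31 p k m a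
    by (unfold_locales; (rule assms)?)
  define h where "h = (p - 1) div 2"
  define T where "T = (\<Prod>(x, y)\<in>L.P. y - x)"
  have LHS: "(\<Prod>i\<in>{1..m}. \<Prod>(s, t)\<in>{(s, t). 1 \<le> s \<and> s < t \<and> t \<le> k}. a i t - a i s) = T"
    unfolding T_def by (rule L.lhs_eq)
  have p2: "p > 2" by (rule L.p_gt2)
  have ph: "p = 2 * h + 1" unfolding h_def using assms(2) p2 by presburger
  have pkm: "p = k * m + 1" using assms(5) p2 by simp
  have h1: "h \<ge> 1" using ph p2 by simp
  have Todd: "[T = ((-1) ^ (h + 1)) ^ ((k - 1) div 2)] (mod int p)" if "odd k"
  proof -
    have "T = (\<Prod>(x, y)\<in>L.P - L.N. y - x)" unfolding T_def L.T_split L.N_odd[OF that] by simp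
    then show ?thesis using L.prod_PN_cong unfolding h_def by simp
  qed
  have Teven: "[T = ((-1) ^ (h + 1)) ^ ((k - 1) div 2) * ((-1) ^ h * (-1) ^ (h - h div 2) * fact h)] (mod int p)"
    if "even k"
  proof -
    have "[(\<Prod>x\<in>{1..h}. int p - 2 * int x) = (\<Prod>x\<in>{1..h}. (- 2) * int x)] (mod int p)"
      by (rule cong_prod) (simp add: cong_iff_dvd_diff)
    also have "(\<Prod>x\<in>{1..h}. (- 2) * int x) = (- 2) ^ h * (\<Prod>x\<in>{1..h}. int x)"
      by (subst prod.distrib) simp
    also have "(\<Prod>x\<in>{1..h}. int x) = fact h" by (simp add: fact_prod)
    also have "(- 2 :: int) ^ h = (- 1) ^ h * 2 ^ h"
      by (metis mult_minus1 power_mult_distrib)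
    also have "[(- 1) ^ h * 2 ^ h * fact h = (- 1) ^ h * (-1) ^ (h - h div 2) * fact h] (mod int p)"
      using two_pow[OF assms(1) p2 assms(2)] unfolding h_def[symmetric]
      by (intro cong_mult cong_refl)
    finally have Nc: "[(\<Prod>x\<in>{1..h}. int p - 2 * int x) = (- 1) ^ h * (-1) ^ (h - h div 2) * fact h] (mod int p)" .
    have "T = (\<Prod>(x, y)\<in>L.P - L.N. y - x) * (\<Prod>x\<in>{1..h}. int p - 2 * int x)"
      unfolding T_def L.T_split L.N_prod[OF that] h_def by simp
    then show ?thesis using cong_mult[OF L.prod_PN_cong Nc] unfolding h_def by simp
  qed
  show ?thesis
  proof (intro conjI impI)
    assume "[p = 1] (mod 2 * m)"
    then obtain q where q: "p = q * (2 * m) + 1" using cong_le_nat[of 1 p] p2 by auto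
    then have "k * m = q * (2 * m)" using pkm by linarith
    then have "k * m = (2 * q) * m" by (metis mult.assoc mult.commute)
    then have kq: "k = 2 * q" using assms(4) mult_right_cancel[of m k "2 * q"] by simp
    then have ev: "even k" by simp
    have e1: "(p + 1) div 2 = h + 1" "(p - 1) div (2 * m) = q" "(p - 3) div 4 = (h - 1) div 2"
      using ph q assms(4) by auto
    have q1: "q \<ge> 1" using kq assms(3) by simp
    have X: "(h + 1) * (q - 1) + (h + 1) = (h + 1) * q" using q1
      by (metis add.commute le_add_diff_inverse mult_Suc_right plus_1_eq_Suc)
    have par: "even ((h + 1) * ((k - 1) div 2) + h + (h - h div 2)) \<longleftrightarrow>
               even ((h + 1) * q + (h - 1) div 2)"
    proof -
      have "(k - 1) div 2 = q - 1" using kq q1 by simp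
      then show ?thesis using X h1 by presburger
    qed
    have EX: "(-1::int) ^ ((h + 1) * ((k - 1) div 2) + h + (h - h div 2)) = (-1) ^ ((h + 1) * q + (h - 1) div 2)"
      using par by (simp add: minus_one_power_iff)
    have "((-1::int) ^ (h + 1)) ^ ((k - 1) div 2) * ((-1) ^ h * (-1) ^ (h - h div 2) * fact h)
        = (-1::int) ^ ((h + 1) * ((k - 1) div 2) + h + (h - h div 2)) * fact h"
      unfolding power_mult[of "-1::int" "h + 1" "(k - 1) div 2", symmetric] by (simp only: power_add mult.assoc)
    also have "\<dots> = (-1) ^ ((h + 1) * q + (h - 1) div 2) * fact h" unfolding EX ..
    finally have "((-1::int) ^ (h + 1)) ^ ((k - 1) div 2) * ((-1) ^ h * (-1) ^ (h - h div 2) * fact h)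
        = (-1) ^ ((p + 1) div 2 * ((p - 1) div (2 * m)) + (p - 3) div 4) * fact ((p - 1) div 2)"
      unfolding e1 h_def[symmetric] .
    then show "[(\<Prod>i\<in>{1..m}. \<Prod>(s, t)\<in>{(s, t). 1 \<le> s \<and> s < t \<and> t \<le> k}. a i t - a i s)
             = (-1) ^ ((p + 1) div 2 * ((p - 1) div (2 * m)) + (p - 3) div 4)
               * fact ((p - 1) div 2)] (mod int p)"
      using Teven[OF ev] unfolding LHS by simp
  next
    assume "[p = 1 + m] (mod 2 * m)"
    moreover have "m \<le> k * m" using assms(3) by (cases k) auto
    then have "1 + m \<le> p" using pkm by simp
    ultimately obtain q where q: "p = q * (2 * m) + (1 + m)" using cong_le_nat[of "1 + m" p] by auto
    then have "k * m = q * (2 * m) + m" using pkm by linarith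
    then have "k * m = (2 * q + 1) * m" by (simp add: algebra_simps)
    then have kq: "k = 2 * q + 1" using assms(4) mult_right_cancel[of m k "2 * q + 1"] by simp
    then have od: "odd k" by simp
    have "p - 1 - m = q * (2 * m)" using q by simp
    then have "(p - 1 - m) div (2 * m) = q" using assms(4) by simp
    then have e1: "(p + 1) div 2 = h + 1" "(p - 1 - m) div (2 * m) = (k - 1) div 2"
      using ph kq by auto
    show "[(\<Prod>i\<in>{1..m}. \<Prod>(s, t)\<in>{(s, t). 1 \<le> s \<and> s < t \<and> t \<le> k}. a i t - a i s)
             = (-1) ^ ((p + 1) div 2 * ((p - 1 - m) div (2 * m)))] (mod int p)"
      using Todd[OF od] unfolding LHS e1 power_mult .
  qed
qed


end
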